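(* Let $N_\nu=2^{n_\nu}$ with $n_\nu\ge1$, let $\mathbf{g}=(g_0,\ldots,g_m)$ with $g_0=1$, $m\ge 1$, and let $\mathbf{s}\in\mathrm{GF}(2)^m$. Let $\boldsymbol{\eta}$ be the output of $\mathrm{convTrans}(\mathbf{0},\mathbf{g},\mathbf{s})$ and $\boldsymbol{\eta}_c=\boldsymbol{\eta}\mathbf{F}^{\otimes n_\nu}$. Then $$\{\mathbf{u}(\mathbf{v})\mathbf{F}^{\otimes n_\nu} : \mathbf{v}\in\mathrm{GF}(2)^{N_\nu},\ v_0=0\}=\{\mathbf{c}+\boldsymbol{\eta}_c : \mathbf{c}\in\mathrm{GF}(2)^{N_\nu},\ \textstyle\sum_{j=0}^{N_\nu-1}c_j=0\},$$ where $\mathbf{u}(\mathbf{v})$ is the output of $\mathrm{convTrans}(\mathbf{v},\mathbf{g},\mathbf{s})$; i.e., the set of possible node outputs is a coset of the single parity check code shifted by $\boldsymbol{\eta}_c$.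
   Context: All arithmetic is over $\mathrm{GF}(2)$. $\mathbf{F}=\begin{bmatrix}1&0\\1&1\end{bmatrix}$ and $\mathbf{F}^{\otimes n}$ is its $n$-fold Kronecker power. The function $\mathrm{convTrans}(\mathbf{v},\mathbf{g},\mathbf{s})$ processes $v_0,\ldots,v_{N-1}$ in order starting from state $\mathbf{s}=(s_0,\ldots,s_{m-1})$: for input bit $v$ and current state $\mathbf{s}$ it outputs $u=g_0v+\sum_{i=1}^m g_i s_{i-1}$ and moves to the state $(v,s_0,\ldots,s_{m-2})$; it returns $\mathbf{u}=(u_0,\ldots,u_{N-1})$ and the final state. *)

theory Defs
  imports Main "HOL-Library.Z2"
begin

text \<open>GF(2) is the field type bit. Vectors are lists of bits; matrices are
  functions nat \<Rightarrow> nat \<Rightarrow> bit (row index, column index), used with explicit sizes.\<close>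

definition F_mat :: "nat \<Rightarrow> nat \<Rightarrow> bit" where
  "F_mat i j = (if i < 2 \<and> j < 2 \<and> j \<le> i then 1 else 0)"

definition kron :: "(nat \<Rightarrow> nat \<Rightarrow> bit) \<Rightarrow> nat \<Rightarrow> (nat \<Rightarrow> nat \<Rightarrow> bit) \<Rightarrow> nat \<Rightarrow> nat \<Rightarrow> bit" where
  "kron A d B i j = A (i div d) (j div d) * B (i mod d) (j mod d)"

fun kron_pow :: "nat \<Rightarrow> nat \<Rightarrow> nat \<Rightarrow> bit" where
  "kron_pow 0 = (\<lambda>i j. if i = 0 \<and> j = 0 then 1 else 0)"
| "kron_pow (Suc n) = kron F_mat (2^n) (kron_pow n)"

definition vecmat :: "nat \<Rightarrow> bit list \<Rightarrow> (nat \<Rightarrow> nat \<Rightarrow> bit) \<Rightarrow> bit list" where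
  "vecmat N v M = map (\<lambda>j. \<Sum>i<N. v ! i * M i j) [0..<N]"

text \<open>convTrans v g s: g = (g_0,...,g_m), s = (s_0,...,s_{m-1}); returns (u, final state).\<close>
fun convTrans :: "bit list \<Rightarrow> bit list \<Rightarrow> bit list \<Rightarrow> bit list \<times> bit list" where
  "convTrans [] g s = ([], s)"
| "convTrans (v # vs) g s =
     (let m = length g - 1;
          u = g ! 0 * v + (\<Sum>i\<in>{1..m}. g ! i * s ! (i - 1));
          r = convTrans vs g (take m (v # s))
      in (u # fst r, snd r))"

end

theory Submission imports Defs begin
declare add_bit_eq_xor[simp del] mult_bit_eq_and[simp del]
lemma bit_cases2: "(x::bit) = 0 \<or> x = 1" by (cases "x = 0") auto
lemma bit_UNIV: "(UNIV::bit set) = {0,1}" using bit_cases2 by auto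
lemma bit_self: "(x::bit) + x = 0" using bit_cases2[of x] by auto
lemma bit_add_eq0: "(x::bit) + y = 0 \<longleftrightarrow> x = y"
  by (metis add.assoc add_0 bit_self add.commute)
lemma finite_bitlists: "finite {xs::bit list. length xs = N}"
proof -
  have "finite (UNIV::bit set)" by (simp add: bit_UNIV)
  then show ?thesis using finite_lists_length_eq[of "UNIV::bit set" N] by simp
qed

lemma len_conv: "length (fst (convTrans v g s)) = length v"
  by (induction v arbitrary: s) (auto simp: Let_def)

lemma conv_lin:
  assumes "length g = m + 1"
  shows "length s1 = m \<Longrightarrow> length s2 = m \<Longrightarrow> length v1 = length v2 \<Longrightarrow>
   fst (convTrans (map2 (+) v1 v2) g (map2 (+) s1 s2)) = map2 (+) (fst (convTrans v1 g s1)) (fst (convTrans v2 g s2))"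
proof (induction v1 arbitrary: v2 s1 s2)
  case Nil then show ?case by simp
next
  case (Cons a v1)
  then obtain b v2' where v2: "v2 = b # v2'" by (cases v2) auto
  have tk: "take m ((a+b) # map2 (+) s1 s2) = map2 (+) (take m (a#s1)) (take m (b#s2))"
    by (metis (no_types) list.map(2) take_map take_zip zip_Cons_Cons case_prod_conv)
  have sm: "(\<Sum>i\<in>{1..m}. g ! i * map2 (+) s1 s2 ! (i - 1)) =
     (\<Sum>i\<in>{1..m}. g ! i * s1 ! (i - 1)) + (\<Sum>i\<in>{1..m}. g ! i * s2 ! (i - 1))"
    using Cons.prems by (auto simp add: sum.distrib[symmetric] distrib_left intro!: sum.cong)
  have IH: "fst (convTrans (map2 (+) v1 v2') g (take m ((a+b) # map2 (+) s1 s2))) =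
     map2 (+) (fst (convTrans v1 g (take m (a#s1)))) (fst (convTrans v2' g (take m (b#s2))))"
    unfolding tk using Cons v2 by (intro Cons.IH) auto
  show ?case using IH sm assms v2 by (simp add: Let_def distrib_left algebra_simps)
qed

lemma map2_zero_right: "map2 (+) xs (replicate (length xs) (0::bit)) = xs"
  by (induction xs) auto
lemma map2_zero_left: "length ys = k \<Longrightarrow> map2 (+) (replicate k (0::bit)) ys = ys"
  by (induction ys arbitrary: k) auto

lemma sum_zero_state[simp]: "(\<Sum>i\<in>{Suc 0..m}. g ! i * replicate m (0::bit) ! (i - Suc 0)) = 0"
  by (intro sum.neutral) auto

lemma map2_eq0: "length a = length b \<Longrightarrow> map2 (+) a b = replicate (length a) (0::bit) \<Longrightarrow> a = b"
proof (induction a arbitrary: b)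
  case Nil then show ?case by simp
next
  case (Cons x a) then show ?case by (cases b) (auto simp: bit_add_eq0)
qed

lemma affine:
  assumes "length g = m + 1" "length s = m"
  shows "fst (convTrans v g s) = map2 (+) (fst (convTrans v g (replicate m 0))) (fst (convTrans (replicate (length v) 0) g s))"
  using conv_lin[OF assms(1), of "replicate m 0" s v "replicate (length v) 0"] assms
  by (simp add: map2_zero_right map2_zero_left)

lemma L_head:
  assumes "length g = m + 1" "g ! 0 = 1" "v \<noteq> []"
  shows "fst (convTrans v g (replicate m 0)) ! 0 = v ! 0"
  using assms by (cases v) (auto simp: Let_def sum_zero_state)

lemma L_kernel:
  assumes "length g = m + 1" "g ! 0 = 1"
  shows "fst (convTrans v g (replicate m 0)) = replicate (length v) 0 \<Longrightarrow> v = replicate (length v) 0"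
proof (induction v)
  case Nil then show ?case by simp
next
  case (Cons a v)
  have a: "a = 0" using Cons.prems assms by (auto simp: Let_def)
  have "take m (0 # replicate m (0::bit)) = replicate m 0"
    by (simp flip: replicate_Suc)
  then show ?case using Cons a assms by (auto simp: Let_def)
qed

lemma L_inj:
  assumes "length g = m + 1" "g ! 0 = 1"
  shows "inj_on (\<lambda>v. fst (convTrans v g (replicate m 0))) {xs. length xs = N}"
proof (rule inj_onI)
  fix a b assume a: "a \<in> {xs. length xs = N}" and b: "b \<in> {xs. length xs = N}"
    and eq: "fst (convTrans a g (replicate m 0)) = fst (convTrans b g (replicate m 0))"
  have z: "map2 (+) (replicate m (0::bit)) (replicate m 0) = replicate m 0"
    by (simp add: map2_zero_left)
  have "fst (convTrans (map2 (+) a b) g (replicate m 0)) =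
     map2 (+) (fst (convTrans a g (replicate m 0))) (fst (convTrans b g (replicate m 0)))"
    using conv_lin[OF assms(1), of "replicate m 0" "replicate m 0" a b] a b z by simp
  also have "\<dots> = replicate (length (map2 (+) a b)) 0"
    using eq a b by (intro nth_equalityI) (auto simp: len_conv bit_self)
  finally have "map2 (+) a b = replicate (length (map2 (+) a b)) 0"
    using L_kernel[OF assms] by blast
  then show "a = b" using a b map2_eq0[of a b] by simp
qed

lemma vm_len[simp]: "length (vecmat N v M) = N" by (simp add: vecmat_def)
lemma vm_nth: "j < N \<Longrightarrow> vecmat N v M ! j = (\<Sum>i<N. v ! i * M i j)" by (simp add: vecmat_def)

lemma vm_add: "length a = N \<Longrightarrow> length b = N \<Longrightarrow>
   vecmat N (map2 (+) a b) M = map2 (+) (vecmat N a M) (vecmat N b M)"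
  by (intro nth_equalityI) (auto simp: vm_nth distrib_right sum.distrib)

lemma le_from_divmod:
  fixes d i j :: nat
  assumes "j div d \<le> i div d" "j div d = i div d \<Longrightarrow> j mod d \<le> i mod d" "d > 0"
  shows "j \<le> i"
proof (cases "j div d = i div d")
  case True
  have "j = d * (j div d) + j mod d" "i = d * (i div d) + i mod d" by simp_all
  then show ?thesis using True assms(2) by (metis add_le_cancel_left)
next
  case False
  then have "j div d + 1 \<le> i div d" using assms(1) by simp
  then have "d * (j div d + 1) \<le> d * (i div d)" by (rule mult_left_mono) simp
  then have "d * (j div d) + d \<le> d * (i div d)" by (simp add: algebra_simps)
  moreover have "j < d * (j div d) + d"
    using assms(3) by (metis add_less_cancel_left div_mult_mod_eq mod_less_divisor mult.commute)
  moreover have "d * (i div d) \<le> i" by (metis div_mult_mod_eq le_add1 mult.commute)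
  ultimately show ?thesis by linarith
qed

lemma kp_nz: "kron_pow n i j \<noteq> 0 \<Longrightarrow> j \<le> i \<and> i < 2^n"
proof (induction n arbitrary: i j)
  case 0 then show ?case by (auto split: if_splits)
next
  case (Suc n)
  let ?d = "(2::nat)^n"
  have F: "F_mat (i div ?d) (j div ?d) \<noteq> 0" and K: "kron_pow n (i mod ?d) (j mod ?d) \<noteq> 0"
    using Suc.prems by (auto simp: kron_def)
  have a: "i div ?d < 2" "j div ?d \<le> i div ?d" using F by (auto simp: F_mat_def split: if_splits)
  have b: "j mod ?d \<le> i mod ?d" using Suc.IH[OF K] by simp
  have "j \<le> i" using le_from_divmod[of j ?d i] a b by simp
  moreover have "i < 2^Suc n"
    using a(1) by (simp add: div_less_iff_less_mult mult.commute)
  ultimately show ?case by simp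
qed

lemma kp_diag: "i < 2^n \<Longrightarrow> kron_pow n i i = 1"
proof (induction n arbitrary: i)
  case 0 then show ?case by simp
next
  case (Suc n)
  have "i div 2^n < 2" using Suc.prems
    by (simp add: less_mult_imp_div_less mult.commute)
  then show ?case using Suc.IH[of "i mod 2^n"] by (simp add: kron_def F_mat_def)
qed

lemma sum_split2: "(\<Sum>j<2*d. f j) = (\<Sum>j<d. f j) + (\<Sum>j<d. f (j + d)) " for f :: "nat \<Rightarrow> 'a::comm_monoid_add"
proof -
  have "(\<Sum>j<2*d. f j) = sum f {0..<d+d}" by (simp add: atLeast0LessThan mult_2)
  also have "\<dots> = sum f {0..<d} + sum f {0+d..<d+d}"
    by (simp add: sum.atLeastLessThan_concat)
  also have "sum f {0+d..<d+d} = (\<Sum>j\<in>{0..<d}. f (j + d))"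
    by (rule sum.shift_bounds_nat_ivl)
  finally show ?thesis by (simp add: atLeast0LessThan)
qed

lemma kp_rowsum: "i < 2^n \<Longrightarrow> (\<Sum>j<2^n. kron_pow n i j) = (if i = 0 then 1 else 0)"
proof (induction n arbitrary: i)
  case 0 then show ?case by simp
next
  case (Suc n)
  let ?d = "(2::nat)^n"
  have a: "i div ?d < 2" using Suc.prems
    by (simp add: less_mult_imp_div_less mult.commute)
  have R: "(\<Sum>j<?d. kron_pow n (i mod ?d) j) = (if i mod ?d = 0 then 1 else 0)"
    using Suc.IH by simp
  have hd: "(j + ?d) div ?d = 1" "(j + ?d) mod ?d = j" if "j < ?d" for j
    using that by (simp_all add: div_add_self2)
  have "(\<Sum>j<2^Suc n. kron_pow (Suc n) i j) =
      (\<Sum>j<?d. F_mat (i div ?d) 0 * kron_pow n (i mod ?d) j) +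
      (\<Sum>j<?d. F_mat (i div ?d) 1 * kron_pow n (i mod ?d) j)"
    by (simp add: sum_split2 kron_def hd)
  also have "\<dots> = (F_mat (i div ?d) 0 + F_mat (i div ?d) 1) * (if i mod ?d = 0 then 1 else 0)"
    by (simp add: sum_distrib_left[symmetric] R distrib_right)
  also have "\<dots> = (if i = 0 then 1 else 0)"
  proof (cases "i div ?d = 0")
    case True
    then have "i mod ?d = i" by (metis div_mult_mod_eq mult_zero_left add_0)
    then show ?thesis using True by (simp add: F_mat_def)
  next
    case False
    then have "i div ?d = 1" using a by simp
    moreover have "i \<noteq> 0" using False by (metis div_0)
    ultimately show ?thesis by (simp add: F_mat_def bit_self)
  qed
  finally show ?case .
qed

lemma vm_sum:
  assumes "length w = 2^n"
  shows "(\<Sum>j<2^n. vecmat (2^n) w (kron_pow n) ! j) = w ! 0"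
proof -
  have "(\<Sum>j<2^n. vecmat (2^n) w (kron_pow n) ! j) = (\<Sum>j<2^n. \<Sum>i<2^n. w ! i * kron_pow n i j)"
    by (simp add: vm_nth)
  also have "\<dots> = (\<Sum>i<(2::nat)^n. w ! i * (\<Sum>j<2^n. kron_pow n i j))"
    by (subst sum.swap) (simp add: sum_distrib_left)
  also have "\<dots> = (\<Sum>i<(2::nat)^n. if i = 0 then w ! 0 else 0)"
    by (intro sum.cong) (auto simp: kp_rowsum)
  also have "\<dots> = w ! 0" by simp
  finally show ?thesis .
qed

lemma vm_kernel:
  assumes "length w = 2^n" "vecmat (2^n) w (kron_pow n) = replicate (2^n) 0"
  shows "w = replicate (2^n) 0"
proof (rule ccontr)
  assume "w \<noteq> replicate (2^n) 0"
  then have "\<exists>i<2^n. w ! i \<noteq> 0" using assms(1)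
    by (metis length_replicate nth_equalityI nth_replicate)
  then have ne: "{i. i < 2^n \<and> w ! i \<noteq> 0} \<noteq> {}" by auto
  define k where "k = Max {i. i < 2^n \<and> w ! i \<noteq> 0}"
  have fin: "finite {i. i < (2::nat)^n \<and> w ! i \<noteq> 0}" by simp
  have kin: "k \<in> {i. i < 2^n \<and> w ! i \<noteq> 0}" using Max_in[OF fin ne] unfolding k_def .
  then have k: "k < 2^n" "w ! k \<noteq> 0" by auto
  have big: "w ! i = 0" if "k < i" "i < 2^n" for i
  proof (rule ccontr)
    assume "w ! i \<noteq> 0"
    then have "i \<le> k" using Max_ge[OF fin, of i] that unfolding k_def by blast
    then show False using that by simp
  qed
  have trm: "w ! i * kron_pow n i k = (if i = k then w ! k else 0)" if i: "i < 2^n" for i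
  proof (cases "i = k")
    case True then show ?thesis using kp_diag[OF k(1)] by simp
  next
    case False
    show ?thesis
    proof (cases "i < k")
      case True have "kron_pow n i k = 0"
      proof (rule ccontr)
        assume "kron_pow n i k \<noteq> 0"
        then have "k \<le> i" using kp_nz by blast
        then show False using True by simp
      qed
      then show ?thesis using False by simp
    next
      case f2: False
      then have "k < i" using False by simp
      then have "w ! i = 0" using big i by blast
      then show ?thesis using False by simp
    qed
  qed
  have "vecmat (2^n) w (kron_pow n) ! k = (\<Sum>i<2^n. w ! i * kron_pow n i k)"
    using k(1) by (rule vm_nth)
  also have "\<dots> = (\<Sum>i<(2::nat)^n. if i = k then w ! k else 0)"
    by (rule sum.cong) (auto simp: trm)
  also have "\<dots> = w ! k" using k(1) by (simp add: sum.delta)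
  finally have "vecmat (2^n) w (kron_pow n) ! k = w ! k" .
  moreover have "vecmat (2^n) w (kron_pow n) ! k = 0" using assms(2) k(1) by simp
  ultimately show False using k(2) by simp
qed

lemma vm_inj: "inj_on (\<lambda>w. vecmat (2^n) w (kron_pow n)) {xs. length xs = 2^n}"
proof (rule inj_onI)
  fix a b assume a: "a \<in> {xs. length xs = (2::nat)^n}" and b: "b \<in> {xs. length xs = (2::nat)^n}"
    and eq: "vecmat (2^n) a (kron_pow n) = vecmat (2^n) b (kron_pow n)"
  have "vecmat (2^n) (map2 (+) a b) (kron_pow n) = map2 (+) (vecmat (2^n) a (kron_pow n)) (vecmat (2^n) b (kron_pow n))"
    using a b by (simp add: vm_add)
  also have "\<dots> = replicate (2^n) 0"
    unfolding eq by (intro nth_equalityI) (auto simp: bit_self)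
  finally have "map2 (+) a b = replicate (2^n) 0" using vm_kernel a b by simp
  then show "a = b" using a b map2_eq0[of a b] by simp
qed

theorem mainTheorem4:
  fixes n m :: nat and g s :: "bit list"
  assumes "n \<ge> 1" and "m \<ge> 1"
    and "length g = m + 1" and "g ! 0 = 1"
    and "length s = m"
  shows "{vecmat (2^n) (fst (convTrans v g s)) (kron_pow n) | v. length v = 2^n \<and> v ! 0 = 0}
       = {map2 (+) c (vecmat (2^n) (fst (convTrans (replicate (2^n) 0) g s)) (kron_pow n))
          | c. length c = 2^n \<and> (\<Sum>j<2^n. c ! j) = 0}"
proof -
  let ?N = "(2::nat)^n"
  let ?K = "kron_pow n"
  let ?L = "\<lambda>v. fst (convTrans v g (replicate m 0))"
  let ?ec = "vecmat ?N (fst (convTrans (replicate ?N 0) g s)) ?K"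
  have dec: "vecmat ?N (fst (convTrans v g s)) ?K = map2 (+) (vecmat ?N (?L v) ?K) ?ec"
    if "length v = ?N" for v
    using affine[OF assms(3) assms(5), of v] that
    by (simp add: vm_add len_conv)
  have Lsurj: "?L ` {xs. length xs = ?N} = {xs. length xs = ?N}"
    by (rule endo_inj_surj[OF finite_bitlists]) (auto simp: len_conv intro: L_inj[OF assms(3,4)])
  have Vsurj: "(\<lambda>w. vecmat ?N w ?K) ` {xs. length xs = ?N} = {xs. length xs = ?N}"
    by (rule endo_inj_surj[OF finite_bitlists]) (auto intro: vm_inj)
  have ne: "v \<noteq> []" if "length v = ?N" for v :: "bit list" using that by auto
  show ?thesis
  proof (intro equalityI subsetI)
    fix x assume "x \<in> {vecmat ?N (fst (convTrans v g s)) ?K | v. length v = ?N \<and> v ! 0 = 0}"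
    then obtain v where v: "length v = ?N" "v ! 0 = 0" and x: "x = vecmat ?N (fst (convTrans v g s)) ?K"
      by blast
    have "(\<Sum>j<?N. vecmat ?N (?L v) ?K ! j) = ?L v ! 0"
      by (rule vm_sum) (simp add: len_conv v)
    also have "\<dots> = 0" using L_head[OF assms(3,4) ne[OF v(1)]] v(2) by simp
    finally show "x \<in> {map2 (+) c ?ec | c. length c = ?N \<and> (\<Sum>j<?N. c ! j) = 0}"
      using x dec[OF v(1)] by auto
  next
    fix x assume "x \<in> {map2 (+) c ?ec | c. length c = ?N \<and> (\<Sum>j<?N. c ! j) = 0}"
    then obtain c where c: "length c = ?N" "(\<Sum>j<?N. c ! j) = 0" and x: "x = map2 (+) c ?ec"
      by blast
    obtain w where w: "length w = ?N" "c = vecmat ?N w ?K" using c(1) Vsurj by (metis (mono_tags, lifting) imageE mem_Collect_eq)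
    have w0: "w ! 0 = 0" using vm_sum[OF w(1)] c(2) w(2) by simp
    obtain v where v: "length v = ?N" "w = ?L v" using w(1) Lsurj by (metis (mono_tags, lifting) imageE mem_Collect_eq)
    have v0: "v ! 0 = 0" using L_head[OF assms(3,4) ne[OF v(1)]] v(2) w0 by simp
    show "x \<in> {vecmat ?N (fst (convTrans v g s)) ?K | v. length v = ?N \<and> v ! 0 = 0}"
    proof (intro CollectI exI conjI)
      show "x = vecmat ?N (fst (convTrans v g s)) ?K" using x w(2) v dec[OF v(1)] by simp
    qed (use v v0 in auto)
  qed
qed

end
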